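(* Let $q=\{q_n\}_{n\geq1}$ be a system of Beurling primes with Beurling integers $\{\nu_n\}_{n\geq1}$, such that $\sigma_c(\zeta_q)<\infty$ and there are constants $c>0$, $C>0$ with $\nu_{n+1}-\nu_n\geq c\,\nu_{n+1}^{-C}$ for all $n\in\mathbb{N}$. Then for every $\varepsilon>0$ and for almost every $q'>1$, the set $q\cup\{q'\}$ is a system of Beurling primes whose Beurling integers $\{\nu'_n\}_{n\geq1}$ satisfy, for some constant $c'>0$ (depending on $q'$ and $q$), $$\nu'_{n+1}-\nu'_n\geq c'\,(\nu'_{n+1})^{-C'},\qquad n\in\mathbb{N},$$ where $C'=\max\bigl(C,\,2\sigma_c(\zeta_q)-1+\varepsilon\bigr)$.
   Context: A system of Beurling primes is an increasing sequence (finite or infinite) $q=\{q_n\}$ of real numbers with $q_n>1$ (and $q_n\to\infty$ if infinite) such that $\{\log q_n\}$ is linearly independent over $\mathbb{Q}$. The Beurling integers $\mathbb{N}_q=\{\nu_n\}_{n\geq1}$ are all finite products of elements of $q$ (including $\nu_1=1$), listed in increasing order. The Beurling zeta function is $\zeta_q(s)=\sum_{n\geq1}\nu_n^{-s}=\prod_{n}(1-q_n^{-s})^{-1}$, and $\sigma_c(\zeta_q)$ denotes the abscissa of convergence of this Dirichlet series. *)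

theory Defs
  imports "HOL-Analysis.Analysis"
begin

text \<open>A system of Beurling primes, represented by its (countable) set of elements:
  all elements exceed 1, the set is locally finite (so it can be listed as an
  increasing sequence, finite or tending to infinity), and the logarithms are
  linearly independent over the rationals.\<close>
definition beurling_primes :: "real set \<Rightarrow> bool" where
  "beurling_primes Q \<longleftrightarrow>
     (\<forall>p\<in>Q. p > 1) \<and>
     (\<forall>x::real. finite {p\<in>Q. p \<le> x}) \<and>
     (\<forall>F a. finite F \<and> F \<subseteq> Q \<and> (\<Sum>p\<in>F. real_of_rat (a p) * ln p) = 0
              \<longrightarrow> (\<forall>p\<in>F. a p = (0::rat)))"

definition beurling_integers :: "real set \<Rightarrow> real set" where
  "beurling_integers Q = {\<Prod>p\<in>F. p ^ e p | F e. finite F \<and> F \<subseteq> Q}"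

text \<open>Abscissa of convergence of the Beurling zeta function
  (the Dirichlet series has positive coefficients, so it is determined by real s).\<close>
definition beurling_abscissa :: "real set \<Rightarrow> ereal" where
  "beurling_abscissa Q =
     Inf {ereal \<sigma> | \<sigma>. (\<lambda>x. x powr (-\<sigma>)) summable_on beurling_integers Q}"

definition gap_condition :: "real set \<Rightarrow> real \<Rightarrow> real \<Rightarrow> bool" where
  "gap_condition N c C \<longleftrightarrow>
     (\<forall>x\<in>N. \<forall>y\<in>N. x < y \<and> (\<forall>z\<in>N. \<not> (x < z \<and> z < y)) \<longrightarrow> y - x \<ge> c * y powr (-C))"

end

theory Submission
  imports Defs
begin


lemma bi_ge1:
  assumes "\<forall>p\<in>Q. p > 1" "x \<in> beurling_integers Q"
  shows "x \<ge> 1"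
proof -
  from assms(2) obtain F e where x: "x = (\<Prod>p\<in>F. p ^ e p)" "finite F" "F \<subseteq> Q"
    unfolding beurling_integers_def by blast
  show ?thesis unfolding x(1) using assms(1) x(3)
    by (intro prod_ge_1 one_le_power) (auto dest!: subsetD intro: less_imp_le)
qed

lemma bi_one: "1 \<in> beurling_integers Q"
  unfolding beurling_integers_def by (rule CollectI, rule exI[of _ "{}"]) auto

lemma bi_insert:
  assumes "x \<in> beurling_integers (insert q Q)"
  shows "\<exists>\<nu>\<in>beurling_integers Q. \<exists>k::nat. x = \<nu> * q ^ k"
proof -
  from assms obtain F e where x: "x = (\<Prod>p\<in>F. p ^ e p)" "finite F" "F \<subseteq> insert q Q"
    unfolding beurling_integers_def by blast
  have m: "(\<Prod>p\<in>F-{q}. p ^ e p) \<in> beurling_integers Q"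
    unfolding beurling_integers_def using x by blast
  show ?thesis
  proof (cases "q \<in> F")
    case True
    have "x = (\<Prod>p\<in>F-{q}. p ^ e p) * q ^ e q"
      unfolding x(1) using True x(2) by (simp add: prod.remove mult.commute)
    then show ?thesis using m by blast
  next
    case False
    then have "x = (\<Prod>p\<in>F-{q}. p ^ e p) * q ^ 0" unfolding x(1) by simp
    then show ?thesis using m by blast
  qed
qed

lemma finite_lower_bound_summable:
  fixes f :: "'a \<Rightarrow> real"
  assumes "f summable_on A" "\<And>x. x \<in> A \<Longrightarrow> f x \<ge> 0" "B \<subseteq> A" "e > 0" "\<And>x. x \<in> B \<Longrightarrow> f x \<ge> e"
  shows "finite B"
proof (rule ccontr)
  assume inf: "infinite B"
  obtain n :: nat where n: "real n * e > infsum f A"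
    by (metis assms(4) ex_less_of_nat_mult)
  obtain F where F: "finite F" "card F = n" "F \<subseteq> B" using infinite_arbitrarily_large[OF inf] by blast
  have "real n * e = (\<Sum>x\<in>F. e)" using F by simp
  also have "\<dots> \<le> sum f F" using F assms(5) by (intro sum_mono) auto
  also have "\<dots> = infsum f F" using F by simp
  also have "\<dots> \<le> infsum f A"
    by (rule infsum_mono_neutral) (use F assms in auto)
  finally show False using n by simp
qed

lemma sum_le_infsum_real:
  fixes f :: "'a \<Rightarrow> real"
  assumes "f summable_on A" "\<And>x. x \<in> A \<Longrightarrow> f x \<ge> 0" "F \<subseteq> A" "finite F"
  shows "sum f F \<le> infsum f A"
proof -
  have "sum f F = infsum f F" using assms by simp
  also have "\<dots> \<le> infsum f A"
    by (rule infsum_mono_neutral) (use assms in auto)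
  finally show ?thesis .
qed



lemma bi_locfin:
  assumes Q1: "\<forall>p\<in>Q. p > 1" and sm: "(\<lambda>x. x powr (-s)) summable_on beurling_integers Q" and s: "s > 0"
  shows "finite {z\<in>beurling_integers Q. z \<le> X}"
proof (cases "X \<ge> 1")
  case True
  show ?thesis
  proof (rule finite_lower_bound_summable[OF sm, of _ "X powr (-s)"])
    show "\<And>x. x \<in> beurling_integers Q \<Longrightarrow> 0 \<le> x powr - s" by simp
    show "0 < X powr - s" using True by simp
    fix x assume "x \<in> {z \<in> beurling_integers Q. z \<le> X}"
    then have "1 \<le> x" "x \<le> X" using bi_ge1[OF Q1] by auto
    then show "X powr - s \<le> x powr - s" using s by (intro powr_mono2') auto
  qed auto
next
  case False
  then have "{z\<in>beurling_integers Q. z \<le> X} = {}" using bi_ge1[OF Q1] by fastforce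
  then show ?thesis by (simp only: finite.emptyI)
qed

lemma bi_gap_all:
  assumes Q1: "\<forall>p\<in>Q. p > 1" and sm: "(\<lambda>x. x powr (-s)) summable_on beurling_integers Q" and s: "s > 0"
    and g: "gap_condition (beurling_integers Q) c C"
    and x: "x \<in> beurling_integers Q" and y: "y \<in> beurling_integers Q" and xy: "x < y"
  shows "y - x \<ge> c * y powr (-C)"
proof -
  define S where "S = {z\<in>beurling_integers Q. x \<le> z \<and> z < y}"
  have fin: "finite S" unfolding S_def
    by (rule finite_subset[OF _ bi_locfin[OF Q1 sm s, of y]]) auto
  have ne: "x \<in> S" unfolding S_def using x xy by auto
  define z where "z = Max S"
  have zS: "z \<in> S" unfolding z_def using fin ne by (intro Max_in) auto
  have xz: "x \<le> z" unfolding z_def using fin ne by (intro Max_ge)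
  have cons: "\<forall>w\<in>beurling_integers Q. \<not> (z < w \<and> w < y)"
  proof (intro ballI notI)
    fix w assume w: "w \<in> beurling_integers Q" "z < w \<and> w < y"
    then have "w \<in> S" using xz unfolding S_def by auto
    then have "w \<le> z" unfolding z_def using fin by (intro Max_ge)
    then show False using w by simp
  qed
  have "y - z \<ge> c * y powr (-C)"
    using g zS y cons unfolding gap_condition_def S_def by blast
  then show ?thesis using xz by simp
qed

lemma countable_locfin:
  assumes "\<forall>x::real. finite {p\<in>Q. p \<le> x}"
  shows "countable Q"
proof -
  have "Q = (\<Union>n::nat. {p\<in>Q. p \<le> real n})"
    by (auto, meson real_arch_simple)
  also have "countable \<dots>" using assms by (intro countable_UN) (auto intro: countable_finite)
  finally show ?thesis .
qed

definition lnspan :: "real set \<Rightarrow> real set" where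
  "lnspan Q = {t. \<exists>F a. finite F \<and> F \<subseteq> Q \<and> t = (\<Sum>p\<in>F. real_of_rat (a p) * ln p)}"

lemma countable_lnspan:
  assumes "countable Q" shows "countable (lnspan Q)"
proof -
  define g where "g = (\<lambda>xs::(rat \<times> real) list. sum_list (map (\<lambda>(r,p). real_of_rat r * ln p) xs))"
  have "lnspan Q \<subseteq> g ` lists (UNIV \<times> Q)"
  proof
    fix t assume "t \<in> lnspan Q"
    then obtain F a where Fa: "finite F" "F \<subseteq> Q" "t = (\<Sum>p\<in>F. real_of_rat (a p) * ln p)"
      unfolding lnspan_def by blast
    define xs where "xs = map (\<lambda>p. (a p, p)) (sorted_list_of_set F)"
    have "xs \<in> lists (UNIV \<times> Q)" unfolding xs_def using Fa by auto
    moreover have "g xs = t"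
      unfolding g_def xs_def Fa(3) using Fa(1)
      by (simp add: o_def sum_list_distinct_conv_sum_set sum.distinct_set_conv_list[symmetric])
    ultimately show "t \<in> g ` lists (UNIV \<times> Q)" by blast
  qed
  moreover have "countable (g ` lists (UNIV \<times> Q))" using assms by auto
  ultimately show ?thesis by (rule countable_subset)
qed

lemma indep_insert:
  assumes bp: "beurling_primes Q" and q: "q > 1" "q \<notin> Q" "ln q \<notin> lnspan Q"
  shows "beurling_primes (insert q Q)"
  unfolding beurling_primes_def
proof (intro conjI allI impI)
  show "\<forall>p\<in>insert q Q. 1 < p" using bp q unfolding beurling_primes_def by auto
  fix x :: real
  have "{p \<in> insert q Q. p \<le> x} \<subseteq> insert q {p \<in> Q. p \<le> x}" by auto
  then show "finite {p \<in> insert q Q. p \<le> x}"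
    using bp unfolding beurling_primes_def by (meson finite_insert finite_subset)
next
  fix F a assume Fa: "finite F \<and> F \<subseteq> insert q Q \<and> (\<Sum>p\<in>F. real_of_rat (a p) * ln p) = 0"
  have indQ: "\<And>G. finite G \<Longrightarrow> G \<subseteq> Q \<Longrightarrow> (\<Sum>p\<in>G. real_of_rat (a p) * ln p) = 0 \<Longrightarrow> \<forall>p\<in>G. a p = 0"
    using bp unfolding beurling_primes_def by blast
  show "\<forall>p\<in>F. a p = 0"
  proof (cases "q \<in> F")
    case False
    then show ?thesis using Fa indQ[of F] by blast
  next
    case True
    have split: "(\<Sum>p\<in>F. real_of_rat (a p) * ln p) = real_of_rat (a q) * ln q + (\<Sum>p\<in>F-{q}. real_of_rat (a p) * ln p)"
      using True Fa by (subst sum.remove[of F q]) auto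
    have aq: "a q = 0"
    proof (rule ccontr)
      assume nz: "a q \<noteq> 0"
      define b where "b = (\<lambda>p. - a p / a q)"
      have "ln q = (\<Sum>p\<in>F-{q}. real_of_rat (b p) * ln p)"
      proof -
        have "real_of_rat (a q) * ln q = - (\<Sum>p\<in>F-{q}. real_of_rat (a p) * ln p)" using split Fa by simp
        then have "ln q = - (\<Sum>p\<in>F-{q}. real_of_rat (a p) * ln p) / real_of_rat (a q)"
          using nz by (simp add: field_simps)
        also have "\<dots> = (\<Sum>p\<in>F-{q}. real_of_rat (b p) * ln p)"
          unfolding b_def by (simp add: sum_divide_distrib sum_negf[symmetric] of_rat_divide of_rat_minus)
        finally show ?thesis .
      qed
      moreover have "finite (F-{q})" "F-{q} \<subseteq> Q" using Fa by auto
      ultimately have "ln q \<in> lnspan Q" unfolding lnspan_def by blast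
      then show False using q by simp
    qed
    then have "\<forall>p\<in>F-{q}. a p = 0" using split Fa indQ[of "F-{q}"] by auto
    then show ?thesis using aq by auto
  qed
qed



lemma pow_diff_ge:
  fixes q1 q2 :: real assumes "0 \<le> q1" "q1 \<le> q2" "m \<ge> 1"
  shows "q2 ^ m - q1 ^ m \<ge> q1 ^ (m - 1) * (q2 - q1)"
proof -
  obtain k where m: "m = Suc k" using assms(3) by (cases m) auto
  have "q1 ^ k \<le> q2 ^ k" using assms by (intro power_mono) auto
  then have "q2 * q1 ^ k \<le> q2 * q2 ^ k" using assms by (intro mult_left_mono) auto
  then show ?thesis unfolding m by (simp add: algebra_simps)
qed

definition Aset :: "real \<Rightarrow> real \<Rightarrow> real \<Rightarrow> real \<Rightarrow> real \<Rightarrow> nat \<Rightarrow> real \<Rightarrow> real set" where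
  "Aset D a b \<nu> \<mu> m \<delta> = {q\<in>{a..b}. \<bar>\<nu> * q ^ m - \<mu>\<bar> < \<delta> * \<mu> powr (-D)}"

lemma Aset_sets: "Aset D a b \<nu> \<mu> m \<delta> \<in> sets lborel"
proof -
  have "Aset D a b \<nu> \<mu> m \<delta> = {a..b} \<inter> {q. \<bar>\<nu> * q ^ m - \<mu>\<bar> < \<delta> * \<mu> powr (-D)}"
    unfolding Aset_def by auto
  moreover have "open {q::real. \<bar>\<nu> * q ^ m - \<mu>\<bar> < \<delta> * \<mu> powr (-D)}"
    by (intro open_Collect_less continuous_intros)
  ultimately show ?thesis by auto
qed

lemma Aset_diam:
  assumes "1 < a" "\<nu> \<ge> 1" "\<mu> \<ge> 1" "m \<ge> 1" "0 < \<delta>" "\<delta> \<le> 1/2" "D \<ge> 0"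
    and q1: "q1 \<in> Aset D a b \<nu> \<mu> m \<delta>" and q2: "q2 \<in> Aset D a b \<nu> \<mu> m \<delta>" and le: "q1 \<le> q2"
  shows "q2 - q1 \<le> 4 * b * \<delta> * \<mu> powr (-D) / \<mu>"
proof -
  define \<eta> where "\<eta> = \<delta> * \<mu> powr (-D)"
  have "\<mu> powr (-D) \<le> 1" using assms by (simp add: powr_minus_divide ge_one_powr_ge_zero)
  then have "\<delta> * \<mu> powr (-D) \<le> 1/2 * 1" using assms by (intro mult_mono) auto
  then have eta: "\<eta> \<le> 1/2" "\<eta> > 0" unfolding \<eta>_def using assms by auto
  have a1: "\<bar>\<nu> * q1 ^ m - \<mu>\<bar> < \<eta>" "a \<le> q1" "q1 \<le> b" using q1 unfolding Aset_def \<eta>_def by auto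
  have a2: "\<bar>\<nu> * q2 ^ m - \<mu>\<bar> < \<eta>" "a \<le> q2" "q2 \<le> b" using q2 unfolding Aset_def \<eta>_def by auto
  have q1pos: "q1 > 0" using a1 assms by auto
  have "\<nu> * q1 ^ m > \<mu> / 2" using a1 eta assms by auto
  moreover have "\<nu> * q1 ^ m = (\<nu> * q1 ^ (m - 1)) * q1" using assms(4)
    by (metis Suc_diff_le diff_Suc_1 mult.assoc mult.commute power_Suc)
  ultimately have "(\<nu> * q1 ^ (m - 1)) * q1 > \<mu> / 2" by simp
  then have "(\<nu> * q1 ^ (m - 1)) * b \<ge> \<mu> / 2"
    using a1 q1pos assms(2) by (smt (verit) mult_left_mono zero_le_mult_iff zero_le_power)
  then have key: "\<nu> * q1 ^ (m - 1) \<ge> \<mu> / (2 * b)" using a1 assms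
    by (simp add: divide_le_eq mult.commute)
  have "\<nu> * (q2 ^ m - q1 ^ m) < 2 * \<eta>" using a1 a2 by (simp add: algebra_simps abs_less_iff)
  moreover have "\<nu> * (q2 ^ m - q1 ^ m) \<ge> \<nu> * (q1 ^ (m - 1) * (q2 - q1))"
    using pow_diff_ge[of q1 q2 m] q1pos le assms by (intro mult_left_mono) auto
  moreover have "\<nu> * (q1 ^ (m - 1) * (q2 - q1)) \<ge> \<mu> / (2 * b) * (q2 - q1)"
  proof -
    have "\<mu> / (2 * b) * (q2 - q1) \<le> (\<nu> * q1 ^ (m - 1)) * (q2 - q1)"
      by (rule mult_right_mono[OF key]) (use le in simp)
    then show ?thesis by (simp add: mult.assoc)
  qed
  ultimately have "\<mu> / (2 * b) * (q2 - q1) < 2 * \<eta>" by linarith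
  then have "q2 - q1 < 4 * b * \<eta> / \<mu>" using assms a1
    by (simp add: field_simps)
  then show ?thesis unfolding \<eta>_def by simp
qed

lemma Aset_meas:
  assumes "1 < a" "\<nu> \<ge> 1" "\<mu> \<ge> 1" "m \<ge> 1" "0 < \<delta>" "\<delta> \<le> 1/2" "D \<ge> 0"
  shows "emeasure lborel (Aset D a b \<nu> \<mu> m \<delta>) \<le>
     ennreal (if \<nu> * a ^ m \<le> 2 * \<mu> then 8 * b * \<delta> * \<mu> powr (-D) / \<mu> else 0)"
proof (cases "Aset D a b \<nu> \<mu> m \<delta> = {}")
  case True then show ?thesis by simp
next
  case False
  then obtain q0 where q0: "q0 \<in> Aset D a b \<nu> \<mu> m \<delta>" by blast
  define L where "L = 4 * b * \<delta> * \<mu> powr (-D) / \<mu>"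
  have "\<mu> powr (-D) \<le> 1" using assms by (simp add: powr_minus_divide ge_one_powr_ge_zero)
  then have eta: "\<delta> * \<mu> powr (-D) \<le> 1"  using assms
    by (auto intro: order_trans[OF mult_left_le[of "\<mu> powr (-D)" \<delta>]])
  have q0': "a \<le> q0" "q0 \<le> b" "\<bar>\<nu> * q0 ^ m - \<mu>\<bar> < \<delta> * \<mu> powr (-D)" using q0 unfolding Aset_def by auto
  have "\<nu> * a ^ m \<le> \<nu> * q0 ^ m" using q0' assms by (intro mult_left_mono power_mono) auto
  then have cond: "\<nu> * a ^ m \<le> 2 * \<mu>" using q0' eta assms abs_less_iff[of "\<nu> * q0 ^ m - \<mu>"] by linarith
  have sub: "Aset D a b \<nu> \<mu> m \<delta> \<subseteq> {q0 - L .. q0 + L}"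
  proof
    fix q assume q: "q \<in> Aset D a b \<nu> \<mu> m \<delta>"
    have "q - q0 \<le> L" if "q0 \<le> q" using Aset_diam[OF assms q0 q that] unfolding L_def .
    moreover have "q0 - q \<le> L" if "q \<le> q0" using Aset_diam[OF assms q q0 that] unfolding L_def .
    ultimately show "q \<in> {q0 - L .. q0 + L}" by fastforce
  qed
  have "L \<ge> 0" unfolding L_def using assms q0' by auto
  have "emeasure lborel (Aset D a b \<nu> \<mu> m \<delta>) \<le> emeasure lborel {q0 - L .. q0 + L}"
    by (rule emeasure_mono[OF sub]) auto
  also have "\<dots> = ennreal (2 * L)" using \<open>L \<ge> 0\<close> by simp
  also have "2 * L = 8 * b * \<delta> * \<mu> powr (-D) / \<mu>" unfolding L_def by simp
  finally show ?thesis using cond by simp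
qed



lemma ln_le_pow: fixes x \<tau> :: real assumes "x \<ge> 1" "\<tau> > 0" shows "ln (2 * x) \<le> (1 + 1/\<tau>) * x powr \<tau>"
proof -
  have "ln (x powr \<tau>) \<le> x powr \<tau> - 1" using assms by (intro ln_le_minus_one) (simp add: powr_gt_zero)
  then have "\<tau> * ln x \<le> x powr \<tau>" using assms by (simp add: ln_powr)
  then have l: "ln x \<le> x powr \<tau> / \<tau>" using assms by (simp add: field_simps)
  have "ln (2 * x) = ln 2 + ln x" using assms by (simp add: ln_mult)
  also have "ln 2 \<le> (1::real)" using ln_2_less_1 by simp
  also have "1 \<le> x powr \<tau>" using assms by (simp add: ge_one_powr_ge_zero)
  finally show ?thesis using l by (simp add: algebra_simps)
qed

lemma card_M_bound:
  assumes "a > 1" "\<nu> \<ge> 1" "\<mu> \<ge> 1"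
  shows "real (card {m\<in>{1..n}. \<nu> * a ^ m \<le> 2 * \<mu>}) \<le> ln (2 * \<mu>) / ln a"
proof -
  define X where "X = ln (2 * \<mu>) / ln a"
  have X0: "X \<ge> 0" unfolding X_def using assms by auto
  have "{m\<in>{1..n}. \<nu> * a ^ m \<le> 2 * \<mu>} \<subseteq> {1..nat \<lfloor>X\<rfloor>}"
  proof
    fix m assume m: "m \<in> {m\<in>{1..n}. \<nu> * a ^ m \<le> 2 * \<mu>}"
    have "a ^ m \<le> \<nu> * a ^ m" using assms by simp
    then have "a ^ m \<le> 2 * \<mu>" using m by simp
    then have "ln (a ^ m) \<le> ln (2 * \<mu>)" using assms by (subst ln_le_cancel_iff) auto
    then have "real m * ln a \<le> ln (2 * \<mu>)" using assms by (simp add: ln_realpow)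
    then have "real m \<le> X" unfolding X_def using assms by (simp add: field_simps)
    then have "m \<le> nat \<lfloor>X\<rfloor>" by (simp add: le_nat_floor)
    then show "m \<in> {1..nat \<lfloor>X\<rfloor>}" using m by auto
  qed
  then have "card {m\<in>{1..n}. \<nu> * a ^ m \<le> 2 * \<mu>} \<le> nat \<lfloor>X\<rfloor>"
    by (metis card_atLeastAtMost card_mono diff_Suc_1 finite_atLeastAtMost)
  then have "real (card {m\<in>{1..n}. \<nu> * a ^ m \<le> 2 * \<mu>}) \<le> real (nat \<lfloor>X\<rfloor>)" by simp
  also have "\<dots> \<le> X" using X0 by linarith
  finally show ?thesis unfolding X_def .
qed

lemma pair_bound:
  fixes a b \<nu> \<mu> \<delta> s \<tau> D :: real and n :: nat
  assumes "a > 1" "\<nu> \<ge> 1" "\<mu> \<ge> 1" "\<delta> > 0" "b > 0" "s > 0" "\<tau> > 0" "2 * s - 1 + 2*\<tau> \<le> D"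
  shows "(\<Sum>m\<in>{1..n}. (if \<nu> * a ^ m \<le> 2 * \<mu> then 8 * b * \<delta> * \<mu> powr (-D) / \<mu> else 0))
     \<le> (8 * b * (1 + 1/\<tau>) * 2 powr s / ln a) * \<delta> * (\<nu> powr (-s) * \<mu> powr (-s))"
proof -
  define M where "M = {m\<in>{1..n}. \<nu> * a ^ m \<le> 2 * \<mu>}"
  define T where "T = 8 * b * \<delta> * \<mu> powr (-D) / \<mu>"
  have T0: "T \<ge> 0" unfolding T_def using assms by auto
  have "(\<Sum>m\<in>{1..n}. (if \<nu> * a ^ m \<le> 2 * \<mu> then T else 0)) = (\<Sum>m\<in>M. T)"
    unfolding M_def by (rule sum.inter_filter[symmetric]) simp
  also have "\<dots> = real (card M) * T" by simp
  finally have eq: "(\<Sum>m\<in>{1..n}. (if \<nu> * a ^ m \<le> 2 * \<mu> then T else 0)) = real (card M) * T" .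
  have rhs0: "(8 * b * (1 + 1/\<tau>) * 2 powr s / ln a) * \<delta> * (\<nu> powr (-s) * \<mu> powr (-s)) \<ge> 0"
    using assms by auto
  show ?thesis
  proof (cases "M = {}")
    case True then show ?thesis using eq rhs0 unfolding T_def by simp
  next
    case False
    then obtain m where "m \<in> M" by blast
    then have "\<nu> * a ^ m \<le> 2 * \<mu>" unfolding M_def by auto
    moreover have "\<nu> \<le> \<nu> * a ^ m" using assms by simp
    ultimately have nu2: "\<nu> \<le> 2 * \<mu>" by linarith
    have c: "real (card M) \<le> ln (2 * \<mu>) / ln a" unfolding M_def by (rule card_M_bound) (use assms in auto)
    define L where "L = ln a"
    define Y where "Y = \<mu> powr (-s)"
    define W where "W = \<nu> powr (-s)"
    have L0: "L > 0" unfolding L_def using assms by simp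
    have Y0: "Y \<ge> 0" "W \<ge> 0" unfolding Y_def W_def by auto
    have h1: "real (card M) * T \<le> (ln (2 * \<mu>) / L) * T" unfolding L_def by (rule mult_right_mono[OF c T0])
    have h2: "(ln (2 * \<mu>) / L) * T \<le> ((1 + 1/\<tau>) * \<mu> powr \<tau> / L) * T"
      using ln_le_pow[of \<mu> \<tau>] assms T0 L0 by (intro mult_right_mono divide_right_mono) auto
    have h3: "T = 8 * b * \<delta> * \<mu> powr (-D-1)"
      unfolding T_def using assms by (simp add: powr_diff powr_minus field_simps)
    have h4: "\<mu> powr (-D-1) \<le> \<mu> powr (-2 * s - 2 * \<tau>)" using assms by (intro powr_mono) auto
    have h5: "\<mu> powr \<tau> * \<mu> powr (-2 * s - 2 * \<tau>) = \<mu> powr (-\<tau>) * (Y * Y)"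
      unfolding Y_def by (simp add: powr_add[symmetric])
    have h6: "\<mu> powr (-\<tau>) \<le> 1" using assms by (simp add: powr_minus_divide ge_one_powr_ge_zero)
    have h7: "Y \<le> 2 powr s * W"
    proof -
      have "\<nu> powr s \<le> (2 * \<mu>) powr s" using nu2 assms by (intro powr_mono2) auto
      also have "\<dots> = 2 powr s * \<mu> powr s" using assms by (simp add: powr_mult)
      finally have "\<nu> powr s \<le> 2 powr s * \<mu> powr s" .
      then show ?thesis unfolding Y_def W_def using assms by (simp add: powr_minus field_simps)
    qed
    define G where "G = (1 + 1/\<tau>) * 8 * b * \<delta> / L"
    have G0: "G \<ge> 0" unfolding G_def using assms L0 by auto
    have "((1 + 1/\<tau>) * \<mu> powr \<tau> / L) * T = G * (\<mu> powr \<tau> * \<mu> powr (-D-1))"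
      unfolding h3 G_def by (simp add: field_simps)
    also have "\<dots> \<le> G * (\<mu> powr \<tau> * \<mu> powr (-2 * s - 2 * \<tau>))"
      using h4 G0 by (intro mult_left_mono) auto
    also have "\<dots> = G * \<mu> powr (-\<tau>) * (Y * Y)" unfolding h5 by simp
    also have "\<dots> \<le> G * 1 * (Y * Y)" using h6 G0 Y0 by (intro mult_right_mono mult_left_mono) auto
    also have "\<dots> \<le> G * ((2 powr s * W) * Y)" proof -
      have "Y * Y \<le> (2 powr s * W) * Y" using h7 Y0 by (intro mult_right_mono) auto
      then show ?thesis using G0 by (simp add: mult_left_mono)
    qed
    also have "\<dots> = (8 * b * (1 + 1/\<tau>) * 2 powr s / ln a) * \<delta> * (\<nu> powr (-s) * \<mu> powr (-s))"
      unfolding G_def W_def Y_def L_def by (simp add: field_simps)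
    finally have "((1 + 1/\<tau>) * \<mu> powr \<tau> / L) * T \<le> (8 * b * (1 + 1/\<tau>) * 2 powr s / ln a) * \<delta> * (\<nu> powr (-s) * \<mu> powr (-s))" .
    then show ?thesis using h1 h2 eq unfolding T_def by linarith
  qed
qed



definition Nn :: "real set \<Rightarrow> nat \<Rightarrow> real set" where
  "Nn Q n = {z\<in>beurling_integers Q. z \<le> real n}"

definition Bn :: "real set \<Rightarrow> real \<Rightarrow> real \<Rightarrow> real \<Rightarrow> real \<Rightarrow> nat \<Rightarrow> real set" where
  "Bn Q D a b \<delta> n = (\<Union>t \<in> Nn Q n \<times> Nn Q n \<times> {1..n}. Aset D a b (fst t) (fst (snd t)) (snd (snd t)) \<delta>)"

context
  fixes Q :: "real set" and s \<tau> D a b :: real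
  assumes Q1: "\<forall>p\<in>Q. p > 1" and sm: "(\<lambda>x. x powr (-s)) summable_on beurling_integers Q"
    and s: "s > 0" and \<tau>: "\<tau> > 0" and D: "2 * s - 1 + 2 * \<tau> \<le> D" "D \<ge> 0" and a: "1 < a" and ab: "a \<le> b"
begin

lemma Nn_fin: "finite (Nn Q n)" unfolding Nn_def using bi_locfin[OF Q1 sm s, of "real n"] by simp

lemma Nn_sum: "(\<Sum>x\<in>Nn Q n. x powr (-s)) \<le> infsum (\<lambda>x. x powr (-s)) (beurling_integers Q)"
  by (rule sum_le_infsum_real[OF sm]) (auto simp: Nn_def Nn_fin[unfolded Nn_def])

lemma Bn_meas:
  assumes "0 < \<delta>" "\<delta> \<le> 1/2"
  shows "emeasure lborel (Bn Q D a b \<delta> n) \<le>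
     ennreal ((8 * b * (1 + 1/\<tau>) * 2 powr s / ln a) * \<delta> * (infsum (\<lambda>x. x powr (-s)) (beurling_integers Q))^2)"
proof -
  define K where "K = 8 * b * (1 + 1/\<tau>) * 2 powr s / ln a"
  define S where "S = infsum (\<lambda>x. x powr (-s)) (beurling_integers Q)"
  define I where "I = Nn Q n \<times> Nn Q n \<times> {1..n}"
  define f where "f = (\<lambda>\<nu> \<mu> (m::nat). if \<nu> * a ^ m \<le> 2 * \<mu> then 8 * b * \<delta> * \<mu> powr (-D) / \<mu> else 0)"
  have fin: "finite I" unfolding I_def using Nn_fin by auto
  have ge1: "\<And>x. x \<in> Nn Q n \<Longrightarrow> x \<ge> 1" unfolding Nn_def using bi_ge1[OF Q1] by auto
  have b0: "b > 0" using a ab by simp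
  have f0: "\<And>\<nu> \<mu> m. \<mu> \<ge> 1 \<Longrightarrow> f \<nu> \<mu> m \<ge> 0" unfolding f_def using b0 assms by auto
  have "emeasure lborel (Bn Q D a b \<delta> n) \<le> (\<Sum>t\<in>I. emeasure lborel (Aset D a b (fst t) (fst (snd t)) (snd (snd t)) \<delta>))"
    unfolding Bn_def I_def[symmetric] by (rule emeasure_subadditive_finite[OF fin]) (use Aset_sets[unfolded sets_lborel] in auto)
  also have "\<dots> \<le> (\<Sum>t\<in>I. ennreal (f (fst t) (fst (snd t)) (snd (snd t))))"
    unfolding f_def using ge1 assms D a
    by (intro sum_mono Aset_meas) (auto simp: I_def)
  also have "\<dots> = ennreal (\<Sum>t\<in>I. f (fst t) (fst (snd t)) (snd (snd t)))"
    using f0 ge1 by (intro sum_ennreal) (auto simp: I_def)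
  also have "(\<Sum>t\<in>I. f (fst t) (fst (snd t)) (snd (snd t))) = (\<Sum>\<nu>\<in>Nn Q n. \<Sum>\<mu>\<in>Nn Q n. \<Sum>m\<in>{1..n}. f \<nu> \<mu> m)"
    unfolding I_def by (simp add: sum.cartesian_product case_prod_beta)
  also have "\<dots> \<le> (\<Sum>\<nu>\<in>Nn Q n. \<Sum>\<mu>\<in>Nn Q n. K * \<delta> * (\<nu> powr (-s) * \<mu> powr (-s)))"
    unfolding f_def K_def using ge1 assms b0 s \<tau> D a
    by (intro sum_mono pair_bound) auto
  also have "\<dots> = K * \<delta> * ((\<Sum>\<nu>\<in>Nn Q n. \<nu> powr (-s)) * (\<Sum>\<mu>\<in>Nn Q n. \<mu> powr (-s)))"
    unfolding sum_product by (simp add: sum_distrib_left)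
  also have "\<dots> \<le> K * \<delta> * (S * S)"
  proof -
    have K0: "K \<ge> 0" unfolding K_def using b0 \<tau> a by auto
    have "(\<Sum>\<nu>\<in>Nn Q n. \<nu> powr (-s)) \<le> S" unfolding S_def by (rule Nn_sum)
    moreover have "0 \<le> (\<Sum>\<nu>\<in>Nn Q n. \<nu> powr (-s))" by (intro sum_nonneg) auto
    ultimately have "(\<Sum>\<nu>\<in>Nn Q n. \<nu> powr (-s)) * (\<Sum>\<mu>\<in>Nn Q n. \<mu> powr (-s)) \<le> S * S"
      by (intro mult_mono) auto
    then show ?thesis using K0 assms by (intro mult_left_mono) auto
  qed
  finally show ?thesis unfolding K_def S_def by (simp add: power2_eq_square ennreal_leI)
qed

end


definition Bad :: "real set \<Rightarrow> real \<Rightarrow> real \<Rightarrow> real \<Rightarrow> real \<Rightarrow> real set" where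
  "Bad Q D a b \<delta> = (\<Union>n. Bn Q D a b \<delta> n)"

definition Zset :: "real set \<Rightarrow> real \<Rightarrow> real \<Rightarrow> real \<Rightarrow> real set" where
  "Zset Q D a b = (\<Inter>k::nat. Bad Q D a b (1 / (real k + 2)))"

lemma ennreal_zero_lemma:
  fixes x :: ennreal and c :: real
  assumes "c \<ge> 0" "\<And>k::nat. x \<le> ennreal (c / (real k + 2))"
  shows "x = 0"
proof -
  have "x \<le> 0"
  proof (rule ennreal_le_epsilon)
    fix e :: real assume e: "0 < e"
    obtain k :: nat where k: "c / e < real k" using reals_Archimedean2 by blast
    then have "c < real k * e" using e by (simp add: field_simps)
    then have "c < (real k + 2) * e" using e by (simp add: algebra_simps)
    then have "c / (real k + 2) < e" by (simp add: field_simps)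
    then have "ennreal (c / (real k + 2)) \<le> ennreal e" by (intro ennreal_leI) simp
    then show "x \<le> 0 + ennreal e" using assms(2)[of k] by simp
  qed
  then show ?thesis by simp
qed

lemma Bn_sets: "Bn Q D a b \<delta> n \<in> sets lborel" if "finite (Nn Q n)"
  unfolding Bn_def using that Aset_sets by (intro sets.finite_UN) auto

lemma Bn_incseq: "incseq (Bn Q D a b \<delta>)"
proof (rule incseq_SucI)
  fix n
  have "Nn Q n \<times> Nn Q n \<times> {1..n} \<subseteq> Nn Q (Suc n) \<times> Nn Q (Suc n) \<times> {1..Suc n}"
    unfolding Nn_def by auto
  then show "Bn Q D a b \<delta> n \<subseteq> Bn Q D a b \<delta> (Suc n)" unfolding Bn_def by blast
qed

context
  fixes Q :: "real set" and s \<tau> D a b :: real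
  assumes Q1: "\<forall>p\<in>Q. p > 1" and sm: "(\<lambda>x. x powr (-s)) summable_on beurling_integers Q"
    and s: "s > 0" and \<tau>: "\<tau> > 0" and D: "2 * s - 1 + 2 * \<tau> \<le> D" "D \<ge> 0" and a: "1 < a" and ab: "a \<le> b"
begin

lemma Bad_sets: "Bad Q D a b \<delta> \<in> sets lborel"
  unfolding Bad_def using Bn_sets Nn_fin[OF Q1 sm s \<tau> D a ab] by blast

lemma Bad_meas:
  assumes "0 < \<delta>" "\<delta> \<le> 1/2"
  shows "emeasure lborel (Bad Q D a b \<delta>) \<le>
     ennreal ((8 * b * (1 + 1/\<tau>) * 2 powr s / ln a) * \<delta> * (infsum (\<lambda>x. x powr (-s)) (beurling_integers Q))^2)"
proof -
  have "emeasure lborel (Bad Q D a b \<delta>) = (SUP n. emeasure lborel (Bn Q D a b \<delta> n))"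
    unfolding Bad_def using Bn_sets Nn_fin[OF Q1 sm s \<tau> D a ab] Bn_incseq
    by (intro SUP_emeasure_incseq[symmetric]) auto
  also have "\<dots> \<le> ennreal ((8 * b * (1 + 1/\<tau>) * 2 powr s / ln a) * \<delta> * (infsum (\<lambda>x. x powr (-s)) (beurling_integers Q))^2)"
    by (rule SUP_least, rule Bn_meas[OF Q1 sm s \<tau> D a ab assms])
  finally show ?thesis .
qed

lemma Zset_null: "Zset Q D a b \<in> null_sets lborel"
proof -
  define c where "c = (8 * b * (1 + 1/\<tau>) * 2 powr s / ln a) * (infsum (\<lambda>x. x powr (-s)) (beurling_integers Q))^2"
  have c0: "c \<ge> 0" unfolding c_def using a ab \<tau> by auto
  have sZ: "Zset Q D a b \<in> sets lborel" unfolding Zset_def using Bad_sets by auto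
  have "emeasure lborel (Zset Q D a b) = 0"
  proof (rule ennreal_zero_lemma[OF c0])
    fix k :: nat
    have "emeasure lborel (Zset Q D a b) \<le> emeasure lborel (Bad Q D a b (1 / (real k + 2)))"
      unfolding Zset_def by (rule emeasure_mono) (use Bad_sets in auto)
    also have "\<dots> \<le> ennreal ((8 * b * (1 + 1/\<tau>) * 2 powr s / ln a) * (1 / (real k + 2)) * (infsum (\<lambda>x. x powr (-s)) (beurling_integers Q))^2)"
      by (rule Bad_meas) (auto simp: field_simps)
    also have "(8 * b * (1 + 1/\<tau>) * 2 powr s / ln a) * (1 / (real k + 2)) * (infsum (\<lambda>x. x powr (-s)) (beurling_integers Q))^2 = c / (real k + 2)"
      unfolding c_def by simp
    finally show "emeasure lborel (Zset Q D a b) \<le> ennreal (c / (real k + 2))" .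
  qed
  then show ?thesis using sZ by auto
qed

lemma good:
  assumes "q \<in> {a..b}" "q \<notin> Zset Q D a b"
  shows "\<exists>\<delta>>0. \<forall>\<nu>\<in>beurling_integers Q. \<forall>\<mu>\<in>beurling_integers Q. \<forall>m\<ge>1. \<bar>\<nu> * q ^ m - \<mu>\<bar> \<ge> \<delta> * \<mu> powr (-D)"
proof -
  obtain k :: nat where k: "q \<notin> Bad Q D a b (1 / (real k + 2))" using assms(2) unfolding Zset_def by blast
  define \<delta> where "\<delta> = 1 / (real k + 2)"
  have "\<forall>\<nu>\<in>beurling_integers Q. \<forall>\<mu>\<in>beurling_integers Q. \<forall>m\<ge>1. \<bar>\<nu> * q ^ m - \<mu>\<bar> \<ge> \<delta> * \<mu> powr (-D)"
  proof (intro ballI allI impI)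
    fix \<nu> \<mu> m assume H: "\<nu> \<in> beurling_integers Q" "\<mu> \<in> beurling_integers Q" "(m::nat) \<ge> 1"
    define n where "n = nat \<lceil>max \<nu> \<mu>\<rceil> + m"
    have "\<nu> \<le> real n" "\<mu> \<le> real n" unfolding n_def by linarith+
    then have "(\<nu>, \<mu>, m) \<in> Nn Q n \<times> Nn Q n \<times> {1..n}" unfolding Nn_def using H by (auto simp: n_def)
    then have "q \<notin> Aset D a b \<nu> \<mu> m \<delta>" using k unfolding Bad_def Bn_def \<delta>_def by force
    then show "\<bar>\<nu> * q ^ m - \<mu>\<bar> \<ge> \<delta> * \<mu> powr (-D)" using assms(1) unfolding Aset_def by auto
  qed
  moreover have "\<delta> > 0" unfolding \<delta>_def by simp
  ultimately show ?thesis by blast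
qed

end


lemma gap_new:
  fixes Q :: "real set" and q c C D \<delta> s :: real
  assumes Q1: "\<forall>p\<in>Q. p > 1" and sm: "(\<lambda>x. x powr (-s)) summable_on beurling_integers Q" and s: "s > 0"
    and g: "gap_condition (beurling_integers Q) c C" and c: "c > 0" and C: "C > 0" and DC: "D \<ge> C"
    and q: "q > 1" and \<delta>: "\<delta> > 0"
    and good: "\<forall>\<nu>\<in>beurling_integers Q. \<forall>\<mu>\<in>beurling_integers Q. \<forall>m\<ge>1. \<bar>\<nu> * q ^ m - \<mu>\<bar> \<ge> \<delta> * \<mu> powr (-D)"
  shows "gap_condition (beurling_integers (insert q Q)) (min c \<delta>) D"
  unfolding gap_condition_def
proof (intro ballI impI)
  fix x y assume xN: "x \<in> beurling_integers (insert q Q)" and yN: "y \<in> beurling_integers (insert q Q)"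
    and xy': "x < y \<and> (\<forall>z\<in>beurling_integers (insert q Q). \<not> (x < z \<and> z < y))"
  have xy: "x < y" using xy' by simp
  obtain \<nu> k where \<nu>: "\<nu> \<in> beurling_integers Q" "x = \<nu> * q ^ k" using bi_insert[OF xN] by blast
  obtain \<mu> l where \<mu>: "\<mu> \<in> beurling_integers Q" "y = \<mu> * q ^ l" using bi_insert[OF yN] by blast
  have \<nu>1: "\<nu> \<ge> 1" and \<mu>1: "\<mu> \<ge> 1" using \<nu> \<mu> bi_ge1[OF Q1] by auto
  have D0: "D > 0" using C DC by simp
  have qk: "q ^ k \<ge> 1" "q ^ l \<ge> 1" using q by auto
  have y\<mu>: "y \<ge> \<mu>" unfolding \<mu>(2) using qk \<mu>1 by (simp add: mult_le_cancel_left1)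
  have x\<nu>: "x \<ge> \<nu>" unfolding \<nu>(2) using qk \<nu>1 by (simp add: mult_le_cancel_left1)
  have ypow: "y powr (-D) \<le> \<mu> powr (-D)" using y\<mu> \<mu>1 D0 by (intro powr_mono2') auto
  have cmin: "min c \<delta> * y powr (-D) \<le> c * y powr (-D)" "min c \<delta> * y powr (-D) \<le> \<delta> * y powr (-D)"
    by (auto intro: mult_right_mono)
  consider "k = l" | "k > l" | "k < l" by linarith
  then show "min c \<delta> * y powr - D \<le> y - x"
  proof cases
    case 1
    then have "\<nu> < \<mu>" using xy \<nu> \<mu> q by (auto simp: mult_less_cancel_right)
    then have "\<mu> - \<nu> \<ge> c * \<mu> powr (-C)" by (rule bi_gap_all[OF Q1 sm s g \<nu>(1) \<mu>(1)])
    moreover have "\<mu> powr (-D) \<le> \<mu> powr (-C)" using DC \<mu>1 by (intro powr_mono) auto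
    moreover have "y - x = q ^ k * (\<mu> - \<nu>)" using 1 \<nu> \<mu> by (simp add: algebra_simps)
    moreover have "q ^ k * (\<mu> - \<nu>) \<ge> \<mu> - \<nu>" using \<open>\<nu> < \<mu>\<close> qk by (simp add: mult_le_cancel_right1)
    ultimately have "y - x \<ge> c * \<mu> powr (-D)" using c
      by (smt (verit, best) mult_left_mono)
    moreover have "c * y powr (-D) \<le> c * \<mu> powr (-D)" using ypow c by simp
    ultimately show ?thesis using cmin by linarith
  next
    case 2
    define d where "d = k - l"
    have d: "d \<ge> 1" "k = l + d" using 2 unfolding d_def by auto
    have "x = q ^ l * (\<nu> * q ^ d)" using \<nu> d by (simp add: power_add algebra_simps)
    moreover have "q ^ l > 0" using q by simp
    ultimately have lt: "\<nu> * q ^ d < \<mu>" using \<mu> xy by (metis mult.commute mult_less_cancel_left_pos)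
    have "y - x = q ^ l * \<bar>\<nu> * q ^ d - \<mu>\<bar>" using \<mu> \<open>x = q ^ l * (\<nu> * q ^ d)\<close> lt by (simp add: algebra_simps)
    also have "\<dots> \<ge> \<bar>\<nu> * q ^ d - \<mu>\<bar>" using qk by (simp add: mult_le_cancel_right1)
    finally have "y - x \<ge> \<delta> * \<mu> powr (-D)" using good \<nu>(1) \<mu>(1) d(1) by fastforce
    moreover have "\<delta> * y powr (-D) \<le> \<delta> * \<mu> powr (-D)" using ypow \<delta> by simp
    ultimately show ?thesis using cmin by linarith
  next
    case 3
    define d where "d = l - k"
    have d: "d \<ge> 1" "l = k + d" using 3 unfolding d_def by auto
    have "y = q ^ k * (\<mu> * q ^ d)" using \<mu> d by (simp add: power_add algebra_simps)
    moreover have "q ^ k > 0" using q by simp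
    ultimately have lt: "\<nu> < \<mu> * q ^ d" using \<nu> xy by (metis mult.commute mult_less_cancel_left_pos)
    have "y - x = q ^ k * \<bar>\<mu> * q ^ d - \<nu>\<bar>" using \<nu> \<open>y = q ^ k * (\<mu> * q ^ d)\<close> lt by (simp add: algebra_simps)
    also have "\<dots> \<ge> \<bar>\<mu> * q ^ d - \<nu>\<bar>" using qk by (simp add: mult_le_cancel_right1)
    finally have "y - x \<ge> \<delta> * \<nu> powr (-D)" using good \<nu>(1) \<mu>(1) d(1) by fastforce
    moreover have "y powr (-D) \<le> \<nu> powr (-D)" using x\<nu> xy \<nu>1 D0 by (intro powr_mono2') auto
    then have "\<delta> * y powr (-D) \<le> \<delta> * \<nu> powr (-D)" using \<delta> by simp
    ultimately show ?thesis using cmin by linarith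
  qed
qed



lemma main_AE:
  fixes Q :: "real set" and c C s \<tau> D :: real
  assumes bp: "beurling_primes Q" and c: "c > 0" and C: "C > 0"
    and g: "gap_condition (beurling_integers Q) c C"
    and s: "s > 0" and \<tau>: "\<tau> > 0" and DC: "C \<le> D" and Ds: "2 * s - 1 + 2 * \<tau> \<le> D"
    and sm: "(\<lambda>x. x powr (-s)) summable_on beurling_integers Q"
  shows "AE q' in lborel. q' > 1 \<longrightarrow>
           q' \<notin> Q \<and> beurling_primes (insert q' Q) \<and>
           (\<exists>c'>0. gap_condition (beurling_integers (insert q' Q)) c' D)"
proof -
  have Q1: "\<forall>p\<in>Q. p > 1" using bp unfolding beurling_primes_def by blast
  have cQ: "countable Q" using bp unfolding beurling_primes_def by (intro countable_locfin) blast
  have D0: "D \<ge> 0" using C DC by simp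
  define aj where "aj = (\<lambda>j::nat. 1 + 1 / (real j + 1))"
  define bj where "bj = (\<lambda>j::nat. real j + 2)"
  have aj1: "\<And>j. aj j > 1" unfolding aj_def by (simp add: add_pos_pos)
  have ajb: "\<And>j. aj j \<le> bj j" unfolding aj_def bj_def by (simp add: field_simps)
  have AE1: "AE q in lborel. q \<notin> Q"
    by (rule AE_I'[OF countable_imp_null_set_lborel[OF cQ]]) auto
  have AE2: "AE q in lborel. q \<notin> exp ` lnspan Q"
    by (rule AE_I'[OF countable_imp_null_set_lborel[OF countable_image[OF countable_lnspan[OF cQ]]]]) auto
  have AE3: "AE q in lborel. \<forall>j. q \<notin> Zset Q D (aj j) (bj j)"
  proof (rule AE_I')
    show "(\<Union>j. Zset Q D (aj j) (bj j)) \<in> null_sets lborel"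
      using Zset_null[OF Q1 sm s \<tau> Ds D0 aj1 ajb] by blast
  qed auto
  from AE1 AE2 AE3 show ?thesis
  proof eventually_elim
    case (elim q)
    show ?case
    proof
      assume q: "q > 1"
      have lnq: "ln q \<notin> lnspan Q"
      proof
        assume "ln q \<in> lnspan Q"
        then have "exp (ln q) \<in> exp ` lnspan Q" by blast
        then show False using elim q by simp
      qed
      have bpq: "beurling_primes (insert q Q)" by (rule indep_insert[OF bp q _ lnq]) (use elim in simp)
      define j where "j = nat \<lceil>max (1 / (q - 1)) q\<rceil>"
      have j1: "1 / (q - 1) \<le> real j" "q \<le> real j" unfolding j_def by linarith+
      have "1 / (real j + 1) \<le> q - 1"
      proof -
        have "1 / (q - 1) \<le> real j + 1" using j1 by simp
        then show ?thesis using q by (simp add: field_simps)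
      qed
      then have qab: "q \<in> {aj j .. bj j}" unfolding aj_def bj_def using j1 by auto
      obtain \<delta> where \<delta>: "\<delta> > 0" "\<forall>\<nu>\<in>beurling_integers Q. \<forall>\<mu>\<in>beurling_integers Q. \<forall>m\<ge>1. \<bar>\<nu> * q ^ m - \<mu>\<bar> \<ge> \<delta> * \<mu> powr (-D)"
        using good[OF Q1 sm s \<tau> Ds D0 aj1 ajb qab] elim by blast
      have "gap_condition (beurling_integers (insert q Q)) (min c \<delta>) D"
        by (rule gap_new[OF Q1 sm s g c C DC q \<delta>(1) \<delta>(2)])
      moreover have "min c \<delta> > 0" using c \<delta> by simp
      ultimately show "q \<notin> Q \<and> beurling_primes (insert q Q) \<and> (\<exists>c'>0. gap_condition (beurling_integers (insert q Q)) c' D)"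
        using elim bpq by blast
    qed
  qed
qed



lemma summable_from_abscissa:
  assumes Q1: "\<forall>p\<in>Q. p > 1" and lt: "beurling_abscissa Q < ereal s"
  shows "(\<lambda>x. x powr (-s)) summable_on beurling_integers Q"
proof -
  obtain \<sigma> where \<sigma>: "\<sigma> < s" "(\<lambda>x. x powr (-\<sigma>)) summable_on beurling_integers Q"
    using lt unfolding beurling_abscissa_def Inf_less_iff by auto
  show ?thesis
  proof (rule summable_on_comparison_test[OF \<sigma>(2)])
    fix x assume "x \<in> beurling_integers Q"
    then have "x \<ge> 1" using bi_ge1[OF Q1] by auto
    then show "x powr (-s) \<le> x powr (-\<sigma>)" using \<sigma> by (intro powr_mono) auto
  qed auto
qed

theorem lemma2p1:
  fixes Q :: "real set" and c C \<epsilon> :: real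
  assumes "beurling_primes Q"
    and "beurling_abscissa Q < \<infinity>"
    and "c > 0" and "C > 0"
    and "gap_condition (beurling_integers Q) c C"
    and "\<epsilon> > 0"
  shows "AE q' in lborel. q' > 1 \<longrightarrow>
           q' \<notin> Q \<and> beurling_primes (insert q' Q) \<and>
           (\<exists>c'>0. gap_condition (beurling_integers (insert q' Q)) c'
              (real_of_ereal (max (ereal C) (2 * beurling_abscissa Q - 1 + ereal \<epsilon>))))"
proof -
  have Q1: "\<forall>p\<in>Q. p > 1" using assms(1) unfolding beurling_primes_def by blast
  define D where "D = real_of_ereal (max (ereal C) (2 * beurling_abscissa Q - 1 + ereal \<epsilon>))"
  define \<tau> where "\<tau> = min (\<epsilon>/4) (C/2)"
  define s0 where "s0 = min (1/2) (C/4)"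
  have \<tau>0: "\<tau> > 0" unfolding \<tau>_def using assms by simp
  have s00: "s0 > 0" unfolding s0_def using assms by simp
  have "\<exists>s. s > 0 \<and> beurling_abscissa Q < ereal s \<and> 2 * s - 1 + 2 * \<tau> \<le> D \<and> C \<le> D"
  proof (cases "beurling_abscissa Q")
    case (real r)
    have "2 * beurling_abscissa Q - 1 + ereal \<epsilon> = ereal (2 * r - 1 + \<epsilon>)" unfolding real by (simp add: one_ereal_def)
    then have "max (ereal C) (2 * beurling_abscissa Q - 1 + ereal \<epsilon>) = ereal (max C (2 * r - 1 + \<epsilon>))"
      by (cases "C \<le> 2 * r - 1 + \<epsilon>") (auto simp: max_def)
    then have "D = real_of_ereal (ereal (max C (2 * r - 1 + \<epsilon>)))" unfolding D_def by (simp only:)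
    then have D: "D = max C (2 * r - 1 + \<epsilon>)"
      by (cases "C \<le> 2 * r - 1 + \<epsilon>") (simp_all add: max_def)
    define s where "s = max s0 (r + \<epsilon>/4)"
    have "2 * s - 1 + 2 * \<tau> \<le> D"
    proof (cases "s0 \<le> r + \<epsilon>/4")
      case True then have "s = r + \<epsilon>/4" unfolding s_def by simp
      then show ?thesis unfolding D \<tau>_def by auto
    next
      case False then have "s = s0" unfolding s_def by simp
      then show ?thesis unfolding D \<tau>_def s0_def by auto
    qed
    moreover have "s > 0" "r < s" unfolding s_def using s00 assms by auto
    ultimately show ?thesis using real D by auto
  next
    case PInf then show ?thesis using assms by simp
  next
    case MInf
    have D: "D = C" unfolding D_def MInf by (simp add: one_ereal_def)
    have "2 * s0 - 1 + 2 * \<tau> \<le> D" unfolding D \<tau>_def s0_def by auto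
    then show ?thesis using s00 D MInf by (intro exI[of _ s0]) auto
  qed
  then obtain s where s: "s > 0" "beurling_abscissa Q < ereal s" "2 * s - 1 + 2 * \<tau> \<le> D" "C \<le> D" by blast
  show ?thesis unfolding D_def[symmetric]
    by (rule main_AE[OF assms(1) assms(3) assms(4) assms(5) s(1) \<tau>0 s(4) s(3)
          summable_from_abscissa[OF Q1 s(2)]])
qed


end
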